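(* For every $n\in\mathbb N$, \[ \mathsf{I}_n(Y;Z_1,\dots,Z_n)=\mathsf{HLS}_n\Bigl(Y,\bigl(Y^{\sigma_n([n]\setminus C)}Z_{\#C}\bigr)_{\varnothing\ne C\subseteq[n]}\Bigr). \]
   Context: Hall–Littlewood–Schubert series: Let $[n]=\{1,\dots,n\}$. $\mathrm{SSYT}_n$ is the set of semistandard Young tableaux with entries in $[n]$ (including the empty one); a tableau is identified with its sequence of columns $(C_1,\dots,C_\ell)$, $C_j\subseteq[n]$ the set of entries of column $j$, and $T_{ij}$ is the entry in row $i$, column $j$. $T$ is reduced if its columns are pairwise distinct; $\mathrm{rSSYT}_n$ is the finite set of reduced tableaux. For cells $(i,j),(i,j+1)$ both in $T$, $\mathrm{Leg}^+_T(i,j)=C_j\cap\{T_{ij},\dots,T_{i,j+1}\}$ if $T_{i,j+1}\notin C_j$, else $\varnothing$ ($\varnothing$ if a cell is missing). $\Phi_T(Y)=\prod_{\mathrm{Leg}^+_T(i,j)\neq\varnothing}(1-Y^{\#\mathrm{Leg}^+_T(i,j)})$. For variables $\mathbf X=(X_C)_{\varnothing\ne C\subseteq[n]}$, $\mathsf{HLS}_n(Y,\mathbf X)=\sum_{T\in\mathrm{rSSYT}_n}\Phi_T(Y)\prod_{C\in T}\frac{X_C}{1-X_C}$; $\mathsf{HLS}_n(Y,(f_C)_C)$ denotes the substitution $X_C\mapsto f_C$. Schubert dimension: $\sigma_n(C)=\sum_{i\in[n]\setminus C}i-\binom{n-\#C+1}{2}$. Gaussian multinomials: $\binom{n}{\varnothing}_Y=1$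 and for $\varnothing\ne I\subseteq[n]$ with $k=\max I$, $\binom{n}{I}_Y=\binom{n}{k}_Y\binom{k}{I\setminus\{k\}}_Y$, where $\binom{n}{k}_Y=\prod_{i=1}^k\frac{1-Y^{n-k+i}}{1-Y^i}$. The Igusa function is $\mathsf I_n(Y;Z_1,\dots,Z_n)=\sum_{I\subseteq[n]}\binom{n}{I}_Y\prod_{i\in I}\frac{Z_i}{1-Z_i}$. *)

theory Defs
  imports Main
begin

(* Tableaux are lists of columns; each column is the (nonempty) set of its entries.
   Rows are indexed from 0: entry (i,j) is the i-th smallest element of column j. *)

definition entry :: "nat set \<Rightarrow> nat \<Rightarrow> nat" where
  "entry C i = sorted_list_of_set C ! i"

definition is_ssyt :: "nat \<Rightarrow> nat set list \<Rightarrow> bool" where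
  "is_ssyt n cs \<longleftrightarrow>
     (\<forall>C\<in>set cs. C \<noteq> {} \<and> C \<subseteq> {1..n}) \<and>
     (\<forall>j. Suc j < length cs \<longrightarrow>
        card (cs ! Suc j) \<le> card (cs ! j) \<and>
        (\<forall>i < card (cs ! Suc j). entry (cs ! j) i \<le> entry (cs ! Suc j) i))"

definition rSSYT :: "nat \<Rightarrow> nat set list set" where
  "rSSYT n = {cs. is_ssyt n cs \<and> distinct cs}"

definition leg_cells :: "nat set list \<Rightarrow> (nat \<times> nat) set" where
  "leg_cells cs = {(i, j). Suc j < length cs \<and> i < card (cs ! Suc j) \<and> i < card (cs ! j)}"

definition leg_plus :: "nat set list \<Rightarrow> nat \<Rightarrow> nat \<Rightarrow> nat set" where
  "leg_plus cs i j =
     (if (i, j) \<in> leg_cells cs \<and> entry (cs ! Suc j) i \<notin> cs ! j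
      then cs ! j \<inter> {entry (cs ! j) i .. entry (cs ! Suc j) i} else {})"

definition Phi :: "nat set list \<Rightarrow> 'a::field \<Rightarrow> 'a" where
  "Phi cs Y = (\<Prod>(i, j) \<in> {(i, j) \<in> leg_cells cs. leg_plus cs i j \<noteq> {}}.
                 1 - Y ^ card (leg_plus cs i j))"

definition HLS :: "nat \<Rightarrow> 'a::field \<Rightarrow> (nat set \<Rightarrow> 'a) \<Rightarrow> 'a" where
  "HLS n Y X = (\<Sum>cs \<in> rSSYT n. Phi cs Y * (\<Prod>C \<in> set cs. X C / (1 - X C)))"

(* Schubert dimension sigma_n(C) (always a nonnegative integer) *)
definition schubert_dim :: "nat \<Rightarrow> nat set \<Rightarrow> nat" where
  "schubert_dim n C = (\<Sum>i \<in> {1..n} - C. i) - ((n - card C + 1) choose 2)"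

definition gbinom :: "nat \<Rightarrow> nat \<Rightarrow> 'a::field \<Rightarrow> 'a" where
  "gbinom n k Y = (\<Prod>i = 1..k. (1 - Y ^ (n - k + i)) / (1 - Y ^ i))"

(* descending list of elements: binom(n; k1 > k2 > ...) = binom(n,k1) binom(k1; k2 > ...) *)
fun gmulti_list :: "nat \<Rightarrow> nat list \<Rightarrow> 'a::field \<Rightarrow> 'a" where
  "gmulti_list n [] Y = 1"
| "gmulti_list n (k # ks) Y = gbinom n k Y * gmulti_list k ks Y"

definition gmulti :: "nat \<Rightarrow> nat set \<Rightarrow> 'a::field \<Rightarrow> 'a" where
  "gmulti n I Y = gmulti_list n (rev (sorted_list_of_set I)) Y"

definition igusa :: "nat \<Rightarrow> 'a::field \<Rightarrow> (nat \<Rightarrow> 'a) \<Rightarrow> 'a" where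
  "igusa n Y Z = (\<Sum>I \<in> Pow {1..n}. gmulti n I Y * (\<Prod>i \<in> I. Z i / (1 - Z i)))"

end

theory Submission
  imports Defs
begin


fun qbin :: "'a::comm_ring_1 \<Rightarrow> nat \<Rightarrow> nat \<Rightarrow> 'a" where
  "qbin q m 0 = 1"
| "qbin q 0 (Suc r) = 0"
| "qbin q (Suc m) (Suc r) = qbin q m (Suc r) + q^(m - r) * qbin q m r"

lemma qbin_zero: "m < r \<Longrightarrow> qbin q m r = 0"
proof (induction m arbitrary: r)
  case 0 then show ?case by (cases r) auto
next
  case (Suc m) then show ?case by (cases r) auto
qed

lemma qbin_ratio: "(1 - q ^ Suc r) * qbin q m (Suc r) = (1 - q ^ (m - r)) * qbin q m r"
proof (induction m arbitrary: r)
  case 0 then show ?case by (cases r) auto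
next
  case (Suc m)
  show ?case
  proof (cases r)
    case 0
    have h: "(1 - q) * qbin q m 1 = 1 - q^m" using Suc.IH[of 0] by simp
    have "(1 - q) * qbin q (Suc m) 1 = (1 - q) * qbin q m 1 + (1 - q) * q^m"
      by (simp add: algebra_simps)
    also have "\<dots> = 1 - q ^ Suc m" using h by (simp add: algebra_simps)
    finally show ?thesis using 0 by simp
  next
    case (Suc s)
    note r = Suc
    show ?thesis
    proof (cases "s < m")
      case True
      then obtain d where m: "m = s + 1 + d" using less_imp_Suc_add[OF True] by auto
      have i1: "(1 - q ^ Suc (Suc s)) * qbin q m (Suc (Suc s)) = (1 - q ^ d) * qbin q m (Suc s)"
        using Suc.IH[of "Suc s"] m by simp
      have i2: "(1 - q ^ Suc s) * qbin q m (Suc s) = (1 - q ^ Suc d) * qbin q m s"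
        using Suc.IH[of s] m by simp
      have e1: "q ^ Suc (Suc s) * q ^ d = q ^ (s + 1 + d + 1)"
        by (simp add: power_add mult_ac)
      have e2: "q ^ Suc d * q ^ Suc s = q ^ (s + 1 + d + 1)"
        by (simp add: power_add mult_ac)
      have "(1 - q ^ Suc r) * qbin q (Suc m) (Suc r)
          = (1 - q ^ Suc (Suc s)) * qbin q m (Suc (Suc s)) + (1 - q ^ Suc (Suc s)) * q^d * qbin q m (Suc s)"
        using r m by (simp add: algebra_simps)
      also have "\<dots> = (1 - q ^ d) * qbin q m (Suc s) + (1 - q ^ Suc (Suc s)) * q^d * qbin q m (Suc s)"
        using i1 by simp
      also have "\<dots> = (1 - q^(s+1+d+1)) * qbin q m (Suc s)"
        by (simp add: algebra_simps power_add)
      also have "\<dots> = (1 - q ^ Suc d) * qbin q m (Suc s) + q ^ Suc d * ((1 - q ^ Suc s) * qbin q m (Suc s))"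
        by (simp add: algebra_simps power_add)
      also have "\<dots> = (1 - q ^ Suc d) * qbin q m (Suc s) + q ^ Suc d * ((1 - q ^ Suc d) * qbin q m s)"
        using i2 by simp
      also have "\<dots> = (1 - q ^ (Suc m - r)) * qbin q (Suc m) r"
        using r m by (simp add: algebra_simps)
      finally show ?thesis .
    next
      case False
      then have z: "qbin q m (Suc s) = 0" "qbin q m (Suc (Suc s)) = 0" by (auto intro: qbin_zero)
      show ?thesis
      proof (cases "s = m")
        case True then show ?thesis using r z by simp
      next
        case False
        then have "qbin q m s = 0" using \<open>\<not> s < m\<close> by (auto intro: qbin_zero)
        then show ?thesis using r z by simp
      qed
    qed
  qed
qed

definition qfact :: "'a::comm_ring_1 \<Rightarrow> nat \<Rightarrow> 'a" where
  "qfact q k = (\<Prod>i = 1..k. 1 - q ^ i)"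

lemma qfact_Suc: "qfact q (Suc k) = qfact q k * (1 - q ^ Suc k)"
  by (simp add: qfact_def)

lemma qfact_qbin: "b \<le> a \<Longrightarrow> qbin q a b * qfact q b * qfact q (a - b) = qfact q a"
proof (induction b)
  case 0 then show ?case by (simp add: qfact_def)
next
  case (Suc b)
  have h: "qfact q (a - b) = qfact q (a - Suc b) * (1 - q ^ (a - b))"
    using Suc.prems qfact_Suc[of q "a - Suc b"] by (simp add: Suc_diff_Suc)
  have "qbin q a (Suc b) * qfact q (Suc b) * qfact q (a - Suc b)
      = ((1 - q ^ Suc b) * qbin q a (Suc b)) * qfact q b * qfact q (a - Suc b)"
    by (simp add: qfact_Suc algebra_simps)
  also have "\<dots> = (1 - q ^ (a - b)) * qbin q a b * qfact q b * qfact q (a - Suc b)"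
    by (simp only: qbin_ratio)
  also have "\<dots> = qbin q a b * qfact q b * qfact q (a - b)" unfolding h by (simp add: algebra_simps)
  finally show ?case using Suc by simp
qed

lemma qfact_add: "qfact q (c + b) = qfact q c * (\<Prod>i = 1..b. 1 - q ^ (c + i))"
proof (induction b)
  case 0 then show ?case by simp
next
  case (Suc b) then show ?case by (simp add: qfact_Suc algebra_simps)
qed

lemma qfact_nz:
  fixes Y :: "'a::field"
  assumes "\<forall>i\<in>{1..n}. Y ^ i \<noteq> 1" "a \<le> n"
  shows "qfact Y a \<noteq> 0"
  using assms unfolding qfact_def by (auto simp: prod_zero_iff)

lemma gbinom_qbin:
  fixes Y :: "'a::field"
  assumes "\<forall>i\<in>{1..n}. Y ^ i \<noteq> 1" "b \<le> a" "a \<le> n"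
  shows "gbinom a b Y = qbin Y a b"
proof -
  have nz: "qfact Y a \<noteq> 0" "qfact Y b \<noteq> 0" "qfact Y (a - b) \<noteq> 0"
    using assms by (auto intro!: qfact_nz[OF assms(1)])
  have "gbinom a b Y = (\<Prod>i = 1..b. 1 - Y ^ (a - b + i)) / qfact Y b"
    unfolding gbinom_def qfact_def by (simp add: prod_dividef)
  also have "(\<Prod>i = 1..b. 1 - Y ^ (a - b + i)) = qfact Y a / qfact Y (a - b)"
    using qfact_add[of Y "a - b" b] assms nz by (simp add: field_simps)
  finally have "gbinom a b Y = qfact Y a / (qfact Y (a - b) * qfact Y b)" by simp
  also have "\<dots> = qbin Y a b"
    using qfact_qbin[OF assms(2), of Y] nz by (simp add: field_simps)
  finally show ?thesis .
qed



lemma entry_in: "finite C \<Longrightarrow> i < card C \<Longrightarrow> entry C i \<in> C"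
  unfolding entry_def by (metis length_sorted_list_of_set nth_mem set_sorted_list_of_set)

lemma entry_mono: "finite C \<Longrightarrow> i < j \<Longrightarrow> j < card C \<Longrightarrow> entry C i < entry C j"
  unfolding entry_def
  by (metis length_sorted_list_of_set sorted_wrt_nth_less strict_sorted_list_of_set)

lemma sorted_insert_max:
  assumes "finite C" "\<forall>y\<in>C. y < x"
  shows "sorted_list_of_set (insert x C) = sorted_list_of_set C @ [x]"
proof -
  have "x \<notin> C" using assms by auto
  have "sorted_wrt (<) (sorted_list_of_set C @ [x])"
    using assms by (simp add: sorted_wrt_append)
  moreover have "set (sorted_list_of_set C @ [x]) = insert x C" using assms by auto
  moreover have "length (sorted_list_of_set C @ [x]) = card (insert x C)"
    using assms \<open>x \<notin> C\<close> by simp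
  ultimately show ?thesis
    using sorted_list_of_set_unique[of "insert x C" "sorted_list_of_set C @ [x]"] assms by simp
qed

lemma entry_insert_lt:
  "finite C \<Longrightarrow> \<forall>y\<in>C. y < x \<Longrightarrow> i < card C \<Longrightarrow> entry (insert x C) i = entry C i"
  unfolding entry_def by (subst sorted_insert_max) (auto simp: nth_append)

lemma entry_insert_eq:
  "finite C \<Longrightarrow> \<forall>y\<in>C. y < x \<Longrightarrow> entry (insert x C) (card C) = x"
  unfolding entry_def by (subst sorted_insert_max) (auto simp: nth_append)

lemma entry_surj: "finite C \<Longrightarrow> x \<in> C \<Longrightarrow> \<exists>p < card C. entry C p = x"
  unfolding entry_def by (metis in_set_conv_nth length_sorted_list_of_set set_sorted_list_of_set)

lemma card_tail:
  assumes "finite C" "i < card C" "\<forall>y\<in>C. y \<le> N"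
  shows "card (C \<inter> {entry C i..N}) = card C - i"
proof -
  have "C \<inter> {entry C i..N} = entry C ` {i..<card C}"
  proof
    show "C \<inter> {entry C i..N} \<subseteq> entry C ` {i..<card C}"
    proof
      fix x assume x: "x \<in> C \<inter> {entry C i..N}"
      then obtain p where p: "p < card C" "entry C p = x" using entry_surj assms(1) by blast
      have "\<not> p < i"
      proof
        assume "p < i" then have "entry C p < entry C i" using entry_mono assms by blast
        then show False using x p by auto
      qed
      then show "x \<in> entry C ` {i..<card C}" using p by auto
    qed
  next
    show "entry C ` {i..<card C} \<subseteq> C \<inter> {entry C i..N}"
    proof
      fix x assume "x \<in> entry C ` {i..<card C}"
      then obtain p where p: "i \<le> p" "p < card C" "x = entry C p" by auto
      have "entry C i \<le> entry C p" using p entry_mono[OF assms(1), of i p] by (cases "i = p") auto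
      then show "x \<in> C \<inter> {entry C i..N}" using p entry_in[OF assms(1)] assms(3) by auto
    qed
  qed
  moreover have "inj_on (entry C) {i..<card C}"
    by (rule inj_onI) (metis atLeastLessThan_iff entry_mono[OF assms(1)] less_irrefl nat_neq_iff)
  ultimately show ?thesis by (simp add: card_image)
qed

definition colle :: "nat set \<Rightarrow> nat set \<Rightarrow> bool" where
  "colle C D \<longleftrightarrow> card D \<le> card C \<and> (\<forall>i < card D. entry C i \<le> entry D i)"

definition Mw :: "'a::comm_ring_1 \<Rightarrow> nat set \<Rightarrow> nat set \<Rightarrow> 'a" where
  "Mw Y C D = (\<Prod>i\<in>{i. i < card D \<and> entry D i \<notin> C}. 1 - Y ^ card (C \<inter> {entry C i..entry D i}))"

definition sig :: "nat set \<Rightarrow> nat" where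
  "sig C = (\<Sum>C) - (card C + 1 choose 2)"

lemma choose2_Suc: "(Suc (Suc k) choose 2) = (Suc k choose 2) + Suc k"
  by (simp add: numeral_2_eq_2)

lemma sum_ge: "C \<subseteq> {1..m} \<Longrightarrow> (card C + 1 choose 2) \<le> \<Sum>C"
proof (induction m arbitrary: C)
  case 0 then show ?case by auto
next
  case (Suc m)
  show ?case
  proof (cases "Suc m \<in> C")
    case False
    then have "C \<subseteq> {1..m}" using Suc.prems by (auto simp: le_Suc_eq)
    then show ?thesis using Suc.IH by blast
  next
    case True
    define C' where "C' = C - {Suc m}"
    have C': "C' \<subseteq> {1..m}" "C = insert (Suc m) C'" "Suc m \<notin> C'" "finite C'"
      using Suc.prems True unfolding C'_def by (auto simp: le_Suc_eq intro: finite_subset)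
    have "card C' \<le> m" using C' card_mono[of "{1..m}" C'] by simp
    have "(card C' + 1 choose 2) \<le> \<Sum>C'" using Suc.IH C' by blast
    then show ?thesis using C' \<open>card C' \<le> m\<close> by (simp add: choose2_Suc)
  qed
qed

lemma sig_insert:
  assumes "C' \<subseteq> {1..m}"
  shows "sig (insert (Suc m) C') = sig C' + (Suc m - card (insert (Suc m) C'))"
proof -
  have f: "finite C'" "Suc m \<notin> C'" using assms by (auto intro: finite_subset)
  have "card C' \<le> m" using assms card_mono[of "{1..m}" C'] by simp
  have "(card C' + 1 choose 2) \<le> \<Sum>C'" using sum_ge assms by blast
  then show ?thesis using f \<open>card C' \<le> m\<close> unfolding sig_def by (simp add: choose2_Suc)
qed

lemma sig_schubert: "C \<subseteq> {1..n} \<Longrightarrow> schubert_dim n ({1..n} - C) = sig C"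
proof -
  assume a: "C \<subseteq> {1..n}"
  have "{1..n} - ({1..n} - C) = C" using a by auto
  moreover have "card ({1..n} - C) = n - card C" using a by (simp add: card_Diff_subset finite_subset)
  moreover have "card C \<le> n" using a card_mono[of "{1..n}" C] by simp
  ultimately show ?thesis unfolding schubert_dim_def sig_def by simp
qed



lemma sub_fin: "C \<subseteq> {1..(m::nat)} \<Longrightarrow> finite C" by (rule finite_subset) auto

lemma sub_lt: "C \<subseteq> {1..(m::nat)} \<Longrightarrow> \<forall>y\<in>C. y < Suc m" by auto

lemma card_ins: "C \<subseteq> {1..(m::nat)} \<Longrightarrow> card (insert (Suc m) C) = Suc (card C)"
  using sub_fin[of C m] by (subst card_insert_disjoint) auto

lemma entry_le: "C \<subseteq> {1..(m::nat)} \<Longrightarrow> i < card C \<Longrightarrow> entry C i \<le> m"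
  using entry_in[OF sub_fin, of C m i] by (auto simp: subset_iff)

lemma c1a:
  assumes "C' \<subseteq> {1..m}" "D \<subseteq> {1..m}" "colle (insert (Suc m) C') D"
  shows "card D \<le> card C'"
proof (rule ccontr)
  assume "\<not> card D \<le> card C'"
  moreover have "card D \<le> Suc (card C')" using assms(3) card_ins[OF assms(1)] unfolding colle_def by simp
  ultimately have "card D = Suc (card C')" by simp
  then have "entry (insert (Suc m) C') (card C') \<le> entry D (card C')"
    using assms(3) unfolding colle_def by simp
  moreover have "entry (insert (Suc m) C') (card C') = Suc m"
    using entry_insert_eq[OF sub_fin[OF assms(1)] sub_lt[OF assms(1)]] .
  moreover have "entry D (card C') \<le> m" using entry_le[OF assms(2)] \<open>card D = Suc (card C')\<close> by simp
  ultimately show False by simp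
qed

lemma c1b:
  assumes "C' \<subseteq> {1..m}" "card D \<le> card C'"
  shows "colle (insert (Suc m) C') D \<longleftrightarrow> colle C' D"
  using assms entry_insert_lt[OF sub_fin[OF assms(1)] sub_lt[OF assms(1)]] card_ins[OF assms(1)]
  unfolding colle_def by auto

lemma c2:
  assumes "C' \<subseteq> {1..m}" "D' \<subseteq> {1..m}"
  shows "colle (insert (Suc m) C') (insert (Suc m) D') \<longleftrightarrow> colle C' D'"
proof
  assume a: "colle (insert (Suc m) C') (insert (Suc m) D')"
  then have cd: "card D' \<le> card C'" using card_ins[OF assms(1)] card_ins[OF assms(2)] unfolding colle_def by simp
  show "colle C' D'" unfolding colle_def
  proof (intro conjI allI impI)
    fix i assume "i < card D'"
    then show "entry C' i \<le> entry D' i"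
      using a cd entry_insert_lt[OF sub_fin[OF assms(1)] sub_lt[OF assms(1)]]
        entry_insert_lt[OF sub_fin[OF assms(2)] sub_lt[OF assms(2)]] card_ins[OF assms(2)]
      unfolding colle_def by (metis less_SucI order_less_le_trans)
  qed (rule cd)
next
  assume a: "colle C' D'"
  have cd: "card D' \<le> card C'" using a unfolding colle_def by simp
  show "colle (insert (Suc m) C') (insert (Suc m) D')" unfolding colle_def
  proof (intro conjI allI impI)
    show "card (insert (Suc m) D') \<le> card (insert (Suc m) C')"
      using cd card_ins[OF assms(1)] card_ins[OF assms(2)] by simp
    fix i assume i: "i < card (insert (Suc m) D')"
    show "entry (insert (Suc m) C') i \<le> entry (insert (Suc m) D') i"
    proof (cases "i < card D'")
      case True
      then show ?thesis using a cd entry_insert_lt[OF sub_fin[OF assms(1)] sub_lt[OF assms(1)]]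
        entry_insert_lt[OF sub_fin[OF assms(2)] sub_lt[OF assms(2)]] unfolding colle_def
        by (metis order_less_le_trans)
    next
      case False
      then have "i = card D'" using i card_ins[OF assms(2)] by simp
      then have "entry (insert (Suc m) D') i = Suc m"
        using entry_insert_eq[OF sub_fin[OF assms(2)] sub_lt[OF assms(2)]] by simp
      moreover have "entry (insert (Suc m) C') i \<in> insert (Suc m) C'"
        using entry_in[of "insert (Suc m) C'" i] sub_fin[OF assms(1)] i cd card_ins[OF assms(1)]
          card_ins[OF assms(2)] by simp
      ultimately show ?thesis using assms(1) by auto
    qed
  qed
qed

lemma c3:
  assumes "C \<subseteq> {1..m}" "D' \<subseteq> {1..m}" "card D' < card C"
  shows "colle C (insert (Suc m) D') \<longleftrightarrow> colle C D'"
proof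
  assume a: "colle C (insert (Suc m) D')"
  show "colle C D'" unfolding colle_def
    using a assms(3) entry_insert_lt[OF sub_fin[OF assms(2)] sub_lt[OF assms(2)]] card_ins[OF assms(2)]
    unfolding colle_def by (metis less_SucI less_imp_le)
next
  assume a: "colle C D'"
  show "colle C (insert (Suc m) D')" unfolding colle_def
  proof (intro conjI allI impI)
    show "card (insert (Suc m) D') \<le> card C" using assms card_ins[OF assms(2)] by simp
    fix i assume i: "i < card (insert (Suc m) D')"
    show "entry C i \<le> entry (insert (Suc m) D') i"
    proof (cases "i < card D'")
      case True
      then show ?thesis using a entry_insert_lt[OF sub_fin[OF assms(2)] sub_lt[OF assms(2)]]
        unfolding colle_def by metis
    next
      case False
      then have "i = card D'" using i card_ins[OF assms(2)] by simp
      then have "entry (insert (Suc m) D') i = Suc m"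
        using entry_insert_eq[OF sub_fin[OF assms(2)] sub_lt[OF assms(2)]] by simp
      moreover have "entry C i \<le> m" using entry_le[OF assms(1)] \<open>i = card D'\<close> assms(3) by simp
      ultimately show ?thesis by simp
    qed
  qed
qed

lemma Mw1:
  assumes "C' \<subseteq> {1..m}" "D \<subseteq> {1..m}" "card D \<le> card C'"
  shows "Mw Y (insert (Suc m) C') D = Mw Y C' D"
  unfolding Mw_def
proof (rule prod.cong)
  show "{i. i < card D \<and> entry D i \<notin> insert (Suc m) C'} = {i. i < card D \<and> entry D i \<notin> C'}"
    using entry_le[OF assms(2)] by fastforce
next
  fix i assume "i \<in> {i. i < card D \<and> entry D i \<notin> C'}"
  then have i: "i < card D" by simp
  have e: "entry (insert (Suc m) C') i = entry C' i"
    using entry_insert_lt[OF sub_fin[OF assms(1)] sub_lt[OF assms(1)]] i assms(3) by simp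
  have "insert (Suc m) C' \<inter> {entry C' i..entry D i} = C' \<inter> {entry C' i..entry D i}"
    using entry_le[OF assms(2) i] by auto
  then show "1 - Y ^ card (insert (Suc m) C' \<inter> {entry (insert (Suc m) C') i..entry D i}) =
         1 - Y ^ card (C' \<inter> {entry C' i..entry D i})" using e by simp
qed

lemma Mw2:
  assumes "C' \<subseteq> {1..m}" "D' \<subseteq> {1..m}" "card D' \<le> card C'"
  shows "Mw Y (insert (Suc m) C') (insert (Suc m) D') = Mw Y C' D'"
  unfolding Mw_def
proof (rule prod.cong)
  have eD: "\<And>i. i < card D' \<Longrightarrow> entry (insert (Suc m) D') i = entry D' i"
    using entry_insert_lt[OF sub_fin[OF assms(2)] sub_lt[OF assms(2)]] by simp
  have eD2: "entry (insert (Suc m) D') (card D') = Suc m"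
    using entry_insert_eq[OF sub_fin[OF assms(2)] sub_lt[OF assms(2)]] by simp
  show "{i. i < card (insert (Suc m) D') \<and> entry (insert (Suc m) D') i \<notin> insert (Suc m) C'} =
        {i. i < card D' \<and> entry D' i \<notin> C'}"
  proof (rule set_eqI)
    fix i
    show "i \<in> {i. i < card (insert (Suc m) D') \<and> entry (insert (Suc m) D') i \<notin> insert (Suc m) C'} \<longleftrightarrow>
          i \<in> {i. i < card D' \<and> entry D' i \<notin> C'}"
      using eD eD2 card_ins[OF assms(2)] entry_le[OF assms(2), of i]
      by (cases "i < card D'") (auto simp: less_Suc_eq)
  qed
next
  fix i assume "i \<in> {i. i < card D' \<and> entry D' i \<notin> C'}"
  then have i: "i < card D'" by simp
  have e: "entry (insert (Suc m) C') i = entry C' i"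
    using entry_insert_lt[OF sub_fin[OF assms(1)] sub_lt[OF assms(1)]] i assms(3) by simp
  have e2: "entry (insert (Suc m) D') i = entry D' i"
    using entry_insert_lt[OF sub_fin[OF assms(2)] sub_lt[OF assms(2)]] i by simp
  have "insert (Suc m) C' \<inter> {entry C' i..entry D' i} = C' \<inter> {entry C' i..entry D' i}"
    using entry_le[OF assms(2) i] by auto
  then show "1 - Y ^ card (insert (Suc m) C' \<inter> {entry (insert (Suc m) C') i..entry (insert (Suc m) D') i}) =
         1 - Y ^ card (C' \<inter> {entry C' i..entry D' i})" using e e2 by simp
qed

lemma Mw3:
  assumes "C \<subseteq> {1..m}" "D' \<subseteq> {1..m}" "card D' < card C"
  shows "Mw Y C (insert (Suc m) D') = (1 - Y ^ (card C - card D')) * Mw Y C D'"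
proof -
  have eD: "\<And>i. i < card D' \<Longrightarrow> entry (insert (Suc m) D') i = entry D' i"
    using entry_insert_lt[OF sub_fin[OF assms(2)] sub_lt[OF assms(2)]] by simp
  have eD2: "entry (insert (Suc m) D') (card D') = Suc m"
    using entry_insert_eq[OF sub_fin[OF assms(2)] sub_lt[OF assms(2)]] by simp
  have set: "{i. i < card (insert (Suc m) D') \<and> entry (insert (Suc m) D') i \<notin> C} =
        insert (card D') {i. i < card D' \<and> entry D' i \<notin> C}"
  proof (rule set_eqI)
    fix i
    show "i \<in> {i. i < card (insert (Suc m) D') \<and> entry (insert (Suc m) D') i \<notin> C} \<longleftrightarrow>
          i \<in> insert (card D') {i. i < card D' \<and> entry D' i \<notin> C}"
      using eD eD2 card_ins[OF assms(2)] assms(1)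
      by (cases "i < card D'") (auto simp: less_Suc_eq)
  qed
  have f1: "card (C \<inter> {entry C (card D')..entry (insert (Suc m) D') (card D')}) = card C - card D'"
  proof -
    have "\<forall>y\<in>C. y \<le> Suc m" using assms(1) by auto
    then show ?thesis using eD2 card_tail[OF sub_fin[OF assms(1)] assms(3), of "Suc m"] by simp
  qed
  have "Mw Y C (insert (Suc m) D') = (1 - Y ^ (card C - card D')) *
     (\<Prod>i\<in>{i. i < card D' \<and> entry D' i \<notin> C}. 1 - Y ^ card (C \<inter> {entry C i..entry (insert (Suc m) D') i}))"
    unfolding Mw_def set using f1 by (subst prod.insert) auto
  also have "(\<Prod>i\<in>{i. i < card D' \<and> entry D' i \<notin> C}. 1 - Y ^ card (C \<inter> {entry C i..entry (insert (Suc m) D') i}))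
     = Mw Y C D'"
    unfolding Mw_def by (rule prod.cong) (auto simp: eD)
  finally show ?thesis .
qed



definition Aset :: "nat \<Rightarrow> nat set \<Rightarrow> nat \<Rightarrow> nat set set" where
  "Aset n D k = {C. C \<subseteq> {1..n} \<and> card C = k \<and> colle C D}"

lemma Aset_fin: "finite (Aset n D k)"
  by (rule finite_subset[of _ "Pow {1..n}"]) (auto simp: Aset_def)

lemma inj_ins: "inj_on (insert (Suc m)) {C. C \<subseteq> {1..m} \<and> P C}"
proof (rule inj_onI)
  fix A B assume a: "A \<in> {C. C \<subseteq> {1..m} \<and> P C}" "B \<in> {C. C \<subseteq> {1..m} \<and> P C}"
    "insert (Suc m) A = insert (Suc m) B"
  have "Suc m \<notin> A" "Suc m \<notin> B" using a by auto
  then show "A = B" using a(3) by (simp add: insert_ident)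
qed

lemma card_le_m: "C \<subseteq> {1..m} \<Longrightarrow> card C \<le> m"
  using card_mono[of "{1..m}" C] by simp

lemma L_lemma:
  fixes Y :: "'a::comm_ring_1"
  shows "D \<subseteq> {1..n} \<Longrightarrow> card D \<le> k \<Longrightarrow>
    (\<Sum>C\<in>Aset n D k. Y ^ sig C * Mw Y C D) = qbin Y (n - card D) (k - card D)"
proof (induction n arbitrary: D k)
  case 0
  then have D: "D = {}" by auto
  have "Aset 0 D k = (if k = 0 then {{}} else {})"
    using D by (auto simp: Aset_def colle_def)
  then show ?case using D by (cases k) (auto simp: sig_def Mw_def)
next
  case (Suc m)
  define F where "F = (\<lambda>C. Y ^ sig C * Mw Y C D)"
  let ?S = "Aset (Suc m) D k"
  define S1 where "S1 = {C \<in> ?S. (Suc m) \<notin> C}"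
  define S2 where "S2 = {C \<in> ?S. (Suc m) \<in> C}"
  have split: "sum F ?S = sum F S1 + sum F S2"
  proof -
    have "?S = S1 \<union> S2" "S1 \<inter> S2 = {}" unfolding S1_def S2_def by auto
    moreover have "finite S1" "finite S2" unfolding S1_def S2_def using Aset_fin by auto
    ultimately show ?thesis by (simp add: sum.union_disjoint)
  qed
  have sub1: "\<And>C. C \<subseteq> {1..Suc m} \<Longrightarrow> (Suc m) \<notin> C \<Longrightarrow> C \<subseteq> {1..m}"
    by (auto simp: le_Suc_eq subset_iff)
  have sub2: "\<And>C. C \<subseteq> {1..Suc m} \<Longrightarrow> (Suc m) \<in> C \<Longrightarrow> C - {(Suc m)} \<subseteq> {1..m} \<and> C = insert (Suc m) (C - {(Suc m)})"
    by (auto simp: le_Suc_eq subset_iff)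
  show ?case
  proof (cases "(Suc m) \<in> D")
    case False
    have Dm: "D \<subseteq> {1..m}" using sub1 Suc.prems False by blast
    have kD: "card D \<le> m" using card_le_m[OF Dm] .
    have S1eq: "S1 = Aset m D k"
    proof (rule set_eqI)
      fix C
      show "C \<in> S1 \<longleftrightarrow> C \<in> Aset m D k"
      proof
        assume "C \<in> S1" then show "C \<in> Aset m D k" unfolding S1_def Aset_def using sub1 by blast
      next
        assume "C \<in> Aset m D k" then show "C \<in> S1" unfolding S1_def Aset_def by force
      qed
    qed
    have s1: "sum F S1 = qbin Y (m - card D) (k - card D)"
      unfolding S1eq F_def using Suc.IH[OF Dm Suc.prems(2)] .
    show ?thesis
    proof (cases "k = card D")
      case True
      have "S2 = {}"
      proof (rule ccontr)
        assume "S2 \<noteq> {}"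
        then obtain C where C: "C \<in> S2" by auto
        then have C1: "C \<subseteq> {1..Suc m}" "(Suc m) \<in> C" "card C = k" "colle C D"
          unfolding S2_def Aset_def by auto
        have C2: "C - {(Suc m)} \<subseteq> {1..m}" "C = insert (Suc m) (C - {(Suc m)})" using sub2 C1 by auto
        have "card D \<le> card (C - {(Suc m)})" using c1a[OF C2(1) Dm, folded C2(2)] C1(4) by blast
        moreover have "card C = Suc (card (C - {(Suc m)}))" using card_ins[OF C2(1), folded C2(2)] .
        ultimately show False using C1 True by linarith
      qed
      then show ?thesis using split s1 True by (simp add: F_def)
    next
      case False
      then have kgt: "card D < k" using Suc.prems by simp
      have S2eq: "S2 = insert (Suc m) ` Aset m D (k - 1)"
      proof
        show "S2 \<subseteq> insert (Suc m) ` Aset m D (k - 1)"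
        proof
          fix C assume C: "C \<in> S2"
          then have C1: "C \<subseteq> {1..Suc m}" "(Suc m) \<in> C" "card C = k" "colle C D"
            unfolding S2_def Aset_def by auto
          have C2: "C - {(Suc m)} \<subseteq> {1..m}" "C = insert (Suc m) (C - {(Suc m)})" using sub2 C1 by auto
          have cc: "card C = Suc (card (C - {(Suc m)}))" using card_ins[OF C2(1), folded C2(2)] .
          have "card D \<le> card (C - {(Suc m)})" using c1a[OF C2(1) Dm, folded C2(2)] C1(4) by blast
          then have "colle (C - {(Suc m)}) D" using c1b[OF C2(1), folded C2(2)] C1(4) by blast
          then have "C - {(Suc m)} \<in> Aset m D (k - 1)" unfolding Aset_def using C2 cc C1 by auto
          then show "C \<in> insert (Suc m) ` Aset m D (k - 1)" using C2 by blast
        qed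
      next
        show "insert (Suc m) ` Aset m D (k - 1) \<subseteq> S2"
        proof
          fix C assume "C \<in> insert (Suc m) ` Aset m D (k - 1)"
          then obtain C' where C': "C' \<subseteq> {1..m}" "card C' = k - 1" "colle C' D" "C = insert (Suc m) C'"
            unfolding Aset_def by auto
          have "colle C D" using c1b[OF C'(1)] C' kgt  by auto
          moreover have "card C = k" using card_ins[OF C'(1)] C' kgt  by simp
          ultimately show "C \<in> S2" unfolding S2_def Aset_def using C'  by auto
        qed
      qed
      have s2: "sum F S2 = Y ^ ((Suc m) - k) * qbin Y (m - card D) (k - 1 - card D)"
      proof -
        have "sum F S2 = (\<Sum>C'\<in>Aset m D (k - 1). F (insert (Suc m) C'))"
          unfolding S2eq  Aset_def by (rule sum.reindex[unfolded comp_def]) (rule inj_ins)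
        also have "\<dots> = (\<Sum>C'\<in>Aset m D (k - 1). Y ^ ((Suc m) - k) * (Y ^ sig C' * Mw Y C' D))"
        proof (rule sum.cong)
          fix C' assume "C' \<in> Aset m D (k - 1)"
          then have C': "C' \<subseteq> {1..m}" "card C' = k - 1" unfolding Aset_def by auto
          have le: "card D \<le> card C'" using C' kgt by simp
          have "sig (insert (Suc m) C') = sig C' + ((Suc m) - k)"
            using sig_insert[OF C'(1)] card_ins[OF C'(1)] C' kgt by simp
          moreover have "Mw Y (insert (Suc m) C') D = Mw Y C' D" by (rule Mw1[OF C'(1) Dm le])
          ultimately show "F (insert (Suc m) C') = Y ^ ((Suc m) - k) * (Y ^ sig C' * Mw Y C' D)"
            unfolding F_def by (simp add: power_add algebra_simps)
        qed simp
        also have "\<dots> = Y ^ ((Suc m) - k) * qbin Y (m - card D) (k - 1 - card D)"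
          using Suc.IH[OF Dm, of "k - 1"] kgt by (simp add: sum_distrib_left[symmetric])
        finally show ?thesis .
      qed
      define M where "M = m - card D"
      define r where "r = k - 1 - card D"
      have e1: "Suc m - card D = Suc M" "k - card D = Suc r" using kD kgt unfolding M_def r_def by auto
      have "qbin Y (Suc M) (Suc r) = qbin Y M (Suc r) + Y ^ ((Suc m) - k) * qbin Y M r"
      proof (cases "r \<le> M")
        case True
        then have "M - r = (Suc m) - k" unfolding M_def r_def  using kgt kD by auto
        then show ?thesis by simp
      next
        case False
        then show ?thesis by (simp add: qbin_zero)
      qed
      then show ?thesis using split s1 s2 e1 unfolding M_def r_def by (simp add: F_def)
    qed
  next
    case True
    define D' where "D' = D - {(Suc m)}"
    have D': "D' \<subseteq> {1..m}" "D = insert (Suc m) D'" using sub2 Suc.prems True unfolding D'_def by auto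
    have cD: "card D = Suc (card D')" using card_ins[OF D'(1)] D'  by simp
    have kD: "card D' \<le> m" using card_le_m[OF D'(1)] .
    have S1eq: "S1 = Aset m D' k"
    proof -
      have "\<And>C. C \<subseteq> {1..m} \<Longrightarrow> card C = k \<Longrightarrow> colle C D \<longleftrightarrow> colle C D'"
        using c3[OF _ D'(1)] cD Suc.prems(2) D'(2)  by simp
      note eq = this
      show ?thesis
      proof (rule set_eqI)
        fix C
        show "C \<in> S1 \<longleftrightarrow> C \<in> Aset m D' k"
        proof
          assume "C \<in> S1"
          then have "C \<subseteq> {1..m}" "card C = k" "colle C D" unfolding S1_def Aset_def using sub1 by auto
          then show "C \<in> Aset m D' k" unfolding Aset_def using eq by blast
        next
          assume "C \<in> Aset m D' k"
          then have "C \<subseteq> {1..m}" "card C = k" "colle C D'" unfolding Aset_def by auto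
          then show "C \<in> S1" unfolding S1_def Aset_def using eq by force
        qed
      qed
    qed
    have s1: "sum F S1 = (1 - Y ^ (k - card D')) * qbin Y (m - card D') (k - card D')"
    proof -
      have "sum F S1 = (\<Sum>C\<in>Aset m D' k. (1 - Y ^ (k - card D')) * (Y ^ sig C * Mw Y C D'))"
        unfolding S1eq F_def
      proof (rule sum.cong)
        fix C assume "C \<in> Aset m D' k"
        then have C: "C \<subseteq> {1..m}" "card C = k" unfolding Aset_def by auto
        show "Y ^ sig C * Mw Y C D = (1 - Y ^ (k - card D')) * (Y ^ sig C * Mw Y C D')"
        proof -
          have lt: "card D' < card C" using C cD Suc.prems(2) by simp
          have "Mw Y C D = (1 - Y ^ (card C - card D')) * Mw Y C D'" using Mw3[OF C(1) D'(1) lt] D'(2) by simp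
          then show ?thesis using C(2) by (simp add: mult.left_commute)
        qed
      qed simp
      also have "\<dots> = (1 - Y ^ (k - card D')) * qbin Y (m - card D') (k - card D')"
        using Suc.IH[OF D'(1), of k] cD Suc.prems(2) by (simp add: sum_distrib_left[symmetric])
      finally show ?thesis .
    qed
    have S2eq: "S2 = insert (Suc m) ` Aset m D' (k - 1)"
    proof
      show "S2 \<subseteq> insert (Suc m) ` Aset m D' (k - 1)"
      proof
        fix C assume C: "C \<in> S2"
        then have C1: "C \<subseteq> {1..Suc m}" "(Suc m) \<in> C" "card C = k" "colle C D"
          unfolding S2_def Aset_def by auto
        have C2: "C - {(Suc m)} \<subseteq> {1..m}" "C = insert (Suc m) (C - {(Suc m)})" using sub2 C1 by auto
        have cc: "card C = Suc (card (C - {(Suc m)}))" using card_ins[OF C2(1), folded C2(2)] .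
        have "colle (C - {(Suc m)}) D'" using c2[OF C2(1) D'(1), folded C2(2) D'(2)] C1(4) by blast
        then have "C - {(Suc m)} \<in> Aset m D' (k - 1)" unfolding Aset_def using C2 cc C1 by auto
        then show "C \<in> insert (Suc m) ` Aset m D' (k - 1)" using C2 by blast
      qed
    next
      show "insert (Suc m) ` Aset m D' (k - 1) \<subseteq> S2"
      proof
        fix C assume "C \<in> insert (Suc m) ` Aset m D' (k - 1)"
        then obtain C' where C': "C' \<subseteq> {1..m}" "card C' = k - 1" "colle C' D'" "C = insert (Suc m) C'"
          unfolding Aset_def by auto
        have "colle C D" using c2[OF C'(1) D'(1)] C' D'  by auto
        moreover have "card C = k" using card_ins[OF C'(1)] C' cD Suc.prems(2)  by simp
        ultimately show "C \<in> S2" unfolding S2_def Aset_def using C'  by auto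
      qed
    qed
    have s2: "sum F S2 = Y ^ ((Suc m) - k) * qbin Y (m - card D') (k - 1 - card D')"
    proof -
      have "sum F S2 = (\<Sum>C'\<in>Aset m D' (k - 1). F (insert (Suc m) C'))"
        unfolding S2eq  Aset_def by (rule sum.reindex[unfolded comp_def]) (rule inj_ins)
      also have "\<dots> = (\<Sum>C'\<in>Aset m D' (k - 1). Y ^ ((Suc m) - k) * (Y ^ sig C' * Mw Y C' D'))"
      proof (rule sum.cong)
        fix C' assume "C' \<in> Aset m D' (k - 1)"
        then have C': "C' \<subseteq> {1..m}" "card C' = k - 1" unfolding Aset_def by auto
        have "sig (insert (Suc m) C') = sig C' + ((Suc m) - k)"
          using sig_insert[OF C'(1)] card_ins[OF C'(1)] C' cD Suc.prems(2)  by simp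
        moreover have "Mw Y (insert (Suc m) C') D = Mw Y C' D'"
        proof -
          have le: "card D' \<le> card C'" using C' cD Suc.prems(2) by simp
          show ?thesis unfolding D'(2) by (rule Mw2[OF C'(1) D'(1) le])
        qed
        ultimately show "F (insert (Suc m) C') = Y ^ ((Suc m) - k) * (Y ^ sig C' * Mw Y C' D')"
          unfolding F_def by (simp add: power_add algebra_simps)
      qed simp
      also have "\<dots> = Y ^ ((Suc m) - k) * qbin Y (m - card D') (k - 1 - card D')"
        using Suc.IH[OF D'(1), of "k - 1"] cD Suc.prems(2) by (simp add: sum_distrib_left[symmetric])
      finally show ?thesis .
    qed
    define M where "M = m - card D'"
    define r where "r = k - card D"
    have e1: "Suc m - card D = M" "k - card D' = Suc r" "k - 1 - card D' = r"
      using kD cD Suc.prems(2) unfolding M_def r_def by auto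
    have rat: "(1 - Y ^ Suc r) * qbin Y M (Suc r) = (1 - Y ^ (M - r)) * qbin Y M r" by (rule qbin_ratio)
    have "Y ^ ((Suc m) - k) * qbin Y M r + (1 - Y ^ (M - r)) * qbin Y M r = qbin Y M r"
    proof (cases "r \<le> M")
      case True
      then have "M - r = (Suc m) - k" unfolding M_def r_def  using cD Suc.prems(2) by auto
      then show ?thesis by (simp add: algebra_simps)
    next
      case False
      then show ?thesis by (simp add: qbin_zero)
    qed
    note key = this
    have a: "sum F S1 = (1 - Y ^ (M - r)) * qbin Y M r"
    proof -
      have "sum F S1 = (1 - Y ^ Suc r) * qbin Y M (Suc r)" using s1 e1(2) unfolding M_def by simp
      then show ?thesis using rat by simp
    qed
    have b: "sum F S2 = Y ^ ((Suc m) - k) * qbin Y M r" using s2 e1(3) unfolding M_def by simp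
    have "sum F (Aset (Suc m) D k) = qbin Y M r" using split a b key by (simp add: algebra_simps)
    then show ?thesis using e1(1) unfolding F_def r_def by simp
  qed
qed



lemma shift_le: "J \<subseteq> {1..m - j} \<Longrightarrow> x \<in> J \<Longrightarrow> j \<le> (m::nat) \<Longrightarrow> x + j \<le> m"
  by (auto dest!: subsetD)

lemma qbin_mult:
  fixes Y :: "'a::field"
  assumes hyp: "\<forall>i\<in>{1..n}. Y ^ i \<noteq> 1" and "l + j \<le> a" "a \<le> n"
  shows "qbin Y a (l + j) * qbin Y (l + j) j = qbin Y a j * qbin Y (a - j) l"
proof -
  define P where "P = qfact Y j * qfact Y l * qfact Y (a - j - l)"
  have P: "P \<noteq> 0" unfolding P_def using qfact_nz[OF hyp] assms by auto
  have h1: "qbin Y (l + j) j * qfact Y j * qfact Y l = qfact Y (l + j)"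
    using qfact_qbin[of j "l + j" Y] by simp
  have h2: "qbin Y a (l + j) * qfact Y (l + j) * qfact Y (a - (l + j)) = qfact Y a"
    using qfact_qbin[of "l + j" a Y] assms by simp
  have h3: "qbin Y (a - j) l * qfact Y l * qfact Y (a - j - l) = qfact Y (a - j)"
    using qfact_qbin[of l "a - j" Y] assms by simp
  have h4: "qbin Y a j * qfact Y j * qfact Y (a - j) = qfact Y a"
    using qfact_qbin[of j a Y] assms by simp
  have e: "a - j - l = a - (l + j)" by simp
  have "qbin Y a (l + j) * qbin Y (l + j) j * P = qbin Y a (l + j) * (qbin Y (l + j) j * qfact Y j * qfact Y l) * qfact Y (a - (l + j))"
    unfolding P_def e by (simp add: algebra_simps)
  also have "\<dots> = qfact Y a" using h1 h2 by simp
  finally have l: "qbin Y a (l + j) * qbin Y (l + j) j * P = qfact Y a" .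
  have "qbin Y a j * qbin Y (a - j) l * P = qbin Y a j * qfact Y j * (qbin Y (a - j) l * qfact Y l * qfact Y (a - j - l))"
    unfolding P_def by (simp add: algebra_simps)
  also have "\<dots> = qfact Y a" using h3 h4 by simp
  finally have r: "qbin Y a j * qbin Y (a - j) l * P = qfact Y a" .
  show ?thesis using l r P by (metis mult_right_cancel)
qed

lemma gml_shift:
  fixes Y :: "'a::field"
  assumes hyp: "\<forall>i\<in>{1..n}. Y ^ i \<noteq> 1"
  shows "sorted_wrt (>) L \<Longrightarrow> \<forall>x\<in>set L. x + j \<le> a \<Longrightarrow> j \<le> a \<Longrightarrow> a \<le> n \<Longrightarrow>
    gmulti_list a (map (\<lambda>x. x + j) L @ [j]) Y = qbin Y a j * gmulti_list (a - j) L Y"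
proof (induction L arbitrary: a)
  case Nil
  then show ?case using gbinom_qbin[OF hyp] by simp
next
  case (Cons l L)
  have lt: "\<forall>x\<in>set L. x + j \<le> l + j" using Cons.prems(1) by auto
  have IH: "gmulti_list (l + j) (map (\<lambda>x. x + j) L @ [j]) Y = qbin Y (l + j) j * gmulti_list l L Y"
    using Cons.IH[OF _ lt] Cons.prems by simp
  have "gmulti_list a (map (\<lambda>x. x + j) (l # L) @ [j]) Y
      = gbinom a (l + j) Y * gmulti_list (l + j) (map (\<lambda>x. x + j) L @ [j]) Y" by simp
  also have "\<dots> = qbin Y a (l + j) * (qbin Y (l + j) j * gmulti_list l L Y)"
    using IH gbinom_qbin[OF hyp, of "l + j" a] Cons.prems by simp
  also have "\<dots> = qbin Y a j * (qbin Y (a - j) l * gmulti_list l L Y)"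
    using qbin_mult[OF hyp, of l j a] Cons.prems by (simp add: mult.assoc[symmetric])
  also have "\<dots> = qbin Y a j * gmulti_list (a - j) (l # L) Y"
  proof -
    have "l \<le> a - j" "a - j \<le> n" using Cons.prems by auto
    then show ?thesis using gbinom_qbin[OF hyp, of l "a - j"] by simp
  qed
  finally show ?case .
qed

lemma sorted_shift:
  fixes J :: "nat set"
  assumes "finite J" "\<forall>x\<in>J. 1 \<le> x"
  shows "sorted_list_of_set (insert j ((\<lambda>x. x + j) ` J)) = j # map (\<lambda>x. x + j) (sorted_list_of_set J)"
proof -
  have nj: "j \<notin> (\<lambda>x. x + j) ` J"
  proof
    assume "j \<in> (\<lambda>x. x + j) ` J"
    then obtain x where x: "x \<in> J" "j = x + j" by auto
    have "1 \<le> x" using assms(2) x(1) by blast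
    then show False using x(2) by simp
  qed
  have "sorted_wrt (<) (j # map (\<lambda>x. x + j) (sorted_list_of_set J))"
    using assms by (auto simp add: sorted_wrt_map)
  moreover have "set (j # map (\<lambda>x. x + j) (sorted_list_of_set J)) = insert j ((\<lambda>x. x + j) ` J)"
    using assms by simp
  moreover have "length (j # map (\<lambda>x. x + j) (sorted_list_of_set J)) = card (insert j ((\<lambda>x. x + j) ` J))"
    using assms nj by (simp add: card_image)
  ultimately show ?thesis
    using sorted_list_of_set_unique[of "insert j ((\<lambda>x. x + j) ` J)" "j # map (\<lambda>x. x + j) (sorted_list_of_set J)"] assms
    by (simp del: sorted_list_of_set_insert_remove)
qed

lemma gmulti_shift:
  fixes Y :: "'a::field"
  assumes hyp: "\<forall>i\<in>{1..n}. Y ^ i \<noteq> 1" and J: "J \<subseteq> {1..m - j}" and "j \<le> m" "m \<le> n"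
  shows "gmulti m (insert j ((\<lambda>x. x + j) ` J)) Y = qbin Y m j * gmulti (m - j) J Y"
proof -
  have f: "finite J" using J by (rule finite_subset) auto
  have g: "\<forall>x\<in>J. 1 \<le> x" using J by auto
  have "rev (sorted_list_of_set (insert j ((\<lambda>x. x + j) ` J))) =
        map (\<lambda>x. x + j) (rev (sorted_list_of_set J)) @ [j]"
    using sorted_shift[OF f g] by (simp add: rev_map)
  moreover have "sorted_wrt (>) (rev (sorted_list_of_set J))"
    by (simp add: sorted_wrt_rev)
  moreover have "\<forall>x\<in>set (rev (sorted_list_of_set J)). x + j \<le> m" using J f assms(3) shift_le by auto
  ultimately show ?thesis unfolding gmulti_def
    using gml_shift[OF hyp, of "rev (sorted_list_of_set J)" j m] assms by simp
qed

lemma igusa_rec: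
  fixes Y :: "'a::field"
  assumes hyp: "\<forall>i\<in>{1..n}. Y ^ i \<noteq> 1" and mn: "m \<le> n"
  shows "igusa m Y W = 1 + (\<Sum>j=1..m. qbin Y m j * (W j / (1 - W j)) * igusa (m - j) Y (\<lambda>i. W (i + j)))"
proof -
  define g where "g = (\<lambda>I. gmulti m I Y * (\<Prod>i\<in>I. W i / (1 - W i)))"
  have fin: "finite (Pow {1..m} - {{}})" by simp
  have "igusa m Y W = sum g (Pow {1..m})" unfolding igusa_def g_def ..
  also have "\<dots> = g {} + sum g (Pow {1..m} - {{}})"
    by (subst sum.remove[of _ "{}"]) auto
  also have "g {} = 1" unfolding g_def gmulti_def by simp
  also have "sum g (Pow {1..m} - {{}}) = (\<Sum>j\<in>{1..m}. sum g {I \<in> Pow {1..m} - {{}}. Min I = j})"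
  proof (rule sum.group[symmetric])
    show "Min ` (Pow {1..m} - {{}}) \<subseteq> {1..m}"
    proof
      fix x assume "x \<in> Min ` (Pow {1..m} - {{}})"
      then obtain I where "I \<subseteq> {1..m}" "I \<noteq> {}" "x = Min I" by auto
      moreover then have "finite I" by (rule_tac finite_subset) auto
      ultimately show "x \<in> {1..m}" using Min_in by blast
    qed
  qed (use fin in auto)
  also have "\<dots> = (\<Sum>j=1..m. qbin Y m j * (W j / (1 - W j)) * igusa (m - j) Y (\<lambda>i. W (i + j)))"
  proof (rule sum.cong[OF refl])
    fix j assume j: "j \<in> {1..m}"
    define f where "f = (\<lambda>J. insert j ((\<lambda>x. x + j) ` J))"
    have seteq: "{I \<in> Pow {1..m} - {{}}. Min I = j} = f ` Pow {1..m - j}"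
    proof
      show "{I \<in> Pow {1..m} - {{}}. Min I = j} \<subseteq> f ` Pow {1..m - j}"
      proof
        fix I assume "I \<in> {I \<in> Pow {1..m} - {{}}. Min I = j}"
        then have I: "I \<subseteq> {1..m}" "I \<noteq> {}" "Min I = j" by auto
        have fI: "finite I" using I(1) by (rule finite_subset) auto
        have jI: "j \<in> I" using Min_in[OF fI I(2)] I(3) by simp
        have ge: "\<forall>x\<in>I. j \<le> x" using Min_le[OF fI] I(3) by auto
        define J where "J = (\<lambda>x. x - j) ` (I - {j})"
        have "J \<subseteq> {1..m - j}"
        proof
          fix y assume "y \<in> J"
          then obtain x where x: "x \<in> I" "x \<noteq> j" "y = x - j" unfolding J_def by auto
          then have "j < x" "x \<le> m" using ge I(1) by (auto simp: le_neq_implies_less)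
          then show "y \<in> {1..m - j}" using x by auto
        qed
        moreover have "(\<lambda>x. x + j) ` J = I - {j}"
        proof -
          have "(\<lambda>x. x + j) ` J = (\<lambda>x. x - j + j) ` (I - {j})" unfolding J_def by (simp add: image_image)
          also have "\<dots> = (\<lambda>x. x) ` (I - {j})"
            by (rule image_cong[OF refl]) (use ge in auto)
          finally show ?thesis by simp
        qed
        then have "I = f J" unfolding f_def using jI by auto
        ultimately show "I \<in> f ` Pow {1..m - j}" by auto
      qed
    next
      show "f ` Pow {1..m - j} \<subseteq> {I \<in> Pow {1..m} - {{}}. Min I = j}"
      proof
        fix I assume "I \<in> f ` Pow {1..m - j}"
        then obtain J where J: "J \<subseteq> {1..m - j}" "I = f J" by auto
        have "I \<subseteq> {1..m}" using J j shift_le[OF J(1)] unfolding f_def by auto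
        moreover have "finite I" using calculation by (rule finite_subset) auto
        moreover have "Min I = j"
          by (rule Min_eqI) (use calculation J in \<open>auto simp: f_def\<close>)
        moreover have "I \<noteq> {}" using J(2) unfolding f_def by simp
        ultimately show "I \<in> {I \<in> Pow {1..m} - {{}}. Min I = j}" by blast
      qed
    qed
    have inj: "inj_on f (Pow {1..m - j})"
    proof (rule inj_onI)
      fix A B assume AB: "A \<in> Pow {1..m - j}" "B \<in> Pow {1..m - j}" "f A = f B"
      have "j \<notin> (\<lambda>x. x + j) ` A" "j \<notin> (\<lambda>x. x + j) ` B" using AB by auto
      then have "(\<lambda>x. x + j) ` A = (\<lambda>x. x + j) ` B" using AB(3) unfolding f_def
        by (simp add: insert_ident)
      then show "A = B" by (rule inj_image_eq_iff[THEN iffD1, rotated]) (simp add: inj_def)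
    qed
    have "sum g {I \<in> Pow {1..m} - {{}}. Min I = j} = sum (g \<circ> f) (Pow {1..m - j})"
      unfolding seteq by (rule sum.reindex[OF inj])
    also have "\<dots> = (\<Sum>J\<in>Pow {1..m - j}. qbin Y m j * (W j / (1 - W j)) *
                      (gmulti (m - j) J Y * (\<Prod>i\<in>J. W (i + j) / (1 - W (i + j)))))"
    proof (rule sum.cong[OF refl])
      fix J assume J: "J \<in> Pow {1..m - j}"
      have fJ: "finite J" using J by (auto intro: finite_subset)
      have nj: "j \<notin> (\<lambda>x. x + j) ` J" using J by auto
      have "(\<Prod>i\<in>f J. W i / (1 - W i)) = (W j / (1 - W j)) * (\<Prod>i\<in>J. W (i + j) / (1 - W (i + j)))"
        unfolding f_def using fJ nj by (simp add: prod.reindex)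
      moreover have "gmulti m (f J) Y = qbin Y m j * gmulti (m - j) J Y"
        unfolding f_def using gmulti_shift[OF hyp, of J m j] J j mn by auto
      ultimately show "(g \<circ> f) J = qbin Y m j * (W j / (1 - W j)) *
                      (gmulti (m - j) J Y * (\<Prod>i\<in>J. W (i + j) / (1 - W (i + j))))"
        unfolding g_def by (simp add: algebra_simps)
    qed
    also have "\<dots> = qbin Y m j * (W j / (1 - W j)) * igusa (m - j) Y (\<lambda>i. W (i + j))"
      unfolding igusa_def by (simp add: sum_distrib_left)
    finally show "sum g {I \<in> Pow {1..m} - {{}}. Min I = j} =
        qbin Y m j * (W j / (1 - W j)) * igusa (m - j) Y (\<lambda>i. W (i + j))" .
  qed
  finally show ?thesis .
qed



definition cols :: "nat \<Rightarrow> nat set set" where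
  "cols n = {D. D \<noteq> {} \<and> D \<subseteq> {1..n}}"

lemma cols_fin: "C \<in> cols n \<Longrightarrow> finite C"
  unfolding cols_def by (auto intro: finite_subset)

lemma finite_cols: "finite (cols n)"
  by (rule finite_subset[of _ "Pow {1..n}"]) (auto simp: cols_def)

lemma ssyt_iff: "is_ssyt n cs \<longleftrightarrow> (\<forall>C\<in>set cs. C \<in> cols n) \<and> (\<forall>j. Suc j < length cs \<longrightarrow> colle (cs!j) (cs!Suc j))"
  unfolding is_ssyt_def colle_def cols_def by blast

lemma colle_refl: "colle C C" unfolding colle_def by simp

lemma colle_trans: "colle A B \<Longrightarrow> colle B C \<Longrightarrow> colle A C"
  unfolding colle_def by (meson le_trans order_less_le_trans)

lemma colle_antisym:
  assumes "finite A" "finite B" "colle A B" "colle B A"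
  shows "A = B"
proof -
  have c: "card A = card B" using assms unfolding colle_def by simp
  have "sorted_list_of_set A = sorted_list_of_set B"
  proof (rule nth_equalityI)
    show "length (sorted_list_of_set A) = length (sorted_list_of_set B)" using c by simp
    fix i assume "i < length (sorted_list_of_set A)"
    then have "i < card B" "i < card A" using c by auto
    then show "sorted_list_of_set A ! i = sorted_list_of_set B ! i"
      using assms(3,4) unfolding colle_def entry_def by (meson antisym)
  qed
  then show ?thesis using assms(1,2) by (metis set_sorted_list_of_set)
qed

lemma ssyt_snoc:
  "is_ssyt n (cs @ [D]) \<longleftrightarrow> is_ssyt n cs \<and> D \<in> cols n \<and> (cs \<noteq> [] \<longrightarrow> colle (last cs) D)"
proof
  assume a: "is_ssyt n (cs @ [D])"
  have "is_ssyt n cs" unfolding ssyt_iff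
  proof (intro conjI allI impI ballI)
    fix C assume "C \<in> set cs" then show "C \<in> cols n" using a unfolding ssyt_iff by auto
  next
    fix j assume j: "Suc j < length cs"
    then show "colle (cs ! j) (cs ! Suc j)" using a unfolding ssyt_iff
      by (metis (no_types, lifting) Suc_lessD length_append_singleton less_SucI nth_append)
  qed
  moreover have "D \<in> cols n" using a unfolding ssyt_iff by auto
  moreover have "cs \<noteq> [] \<longrightarrow> colle (last cs) D"
  proof
    assume ne: "cs \<noteq> []"
    then have "Suc (length cs - 1) < length (cs @ [D])" by simp
    then have "colle ((cs @ [D]) ! (length cs - 1)) ((cs @ [D]) ! Suc (length cs - 1))"
      using a unfolding ssyt_iff by blast
    then show "colle (last cs) D" using ne by (simp add: nth_append last_conv_nth)
  qed
  ultimately show "is_ssyt n cs \<and> D \<in> cols n \<and> (cs \<noteq> [] \<longrightarrow> colle (last cs) D)" by blast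
next
  assume a: "is_ssyt n cs \<and> D \<in> cols n \<and> (cs \<noteq> [] \<longrightarrow> colle (last cs) D)"
  show "is_ssyt n (cs @ [D])" unfolding ssyt_iff
  proof (intro conjI allI impI ballI)
    fix C assume "C \<in> set (cs @ [D])" then show "C \<in> cols n" using a unfolding ssyt_iff by auto
  next
    fix j assume j: "Suc j < length (cs @ [D])"
    show "colle ((cs @ [D]) ! j) ((cs @ [D]) ! Suc j)"
    proof (cases "Suc j < length cs")
      case True
      then show ?thesis using a unfolding ssyt_iff by (simp add: nth_append)
    next
      case False
      then have jj: "Suc j = length cs" using j by simp
      then have ne: "cs \<noteq> []" by auto
      have jl: "j = length cs - 1" using jj by simp
      have "(cs @ [D]) ! j = last cs" "(cs @ [D]) ! Suc j = D"
        using ne jj by (auto simp: nth_append last_conv_nth jl)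
      then show ?thesis using a ne by simp
    qed
  qed
qed

lemma chain_last: "is_ssyt n cs \<Longrightarrow> C \<in> set cs \<Longrightarrow> colle C (last cs)"
proof (induction cs rule: rev_induct)
  case Nil then show ?case by simp
next
  case (snoc D cs)
  show ?case
  proof (cases "C = D")
    case True then show ?thesis by (simp add: colle_refl)
  next
    case False
    then have "C \<in> set cs" using snoc.prems by simp
    moreover have "cs \<noteq> []" using calculation by auto
    moreover have "is_ssyt n cs" "colle (last cs) D" using snoc.prems ssyt_snoc[of n cs D] calculation by auto
    ultimately show ?thesis using snoc.IH colle_trans by (metis last_snoc)
  qed
qed

lemma rssyt_snoc:
  "cs @ [D] \<in> rSSYT n \<longleftrightarrow> cs \<in> rSSYT n \<and> D \<in> cols n \<and> (cs \<noteq> [] \<longrightarrow> colle (last cs) D \<and> last cs \<noteq> D)"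
proof
  assume a: "cs @ [D] \<in> rSSYT n"
  then have s: "is_ssyt n cs" "D \<in> cols n" "cs \<noteq> [] \<longrightarrow> colle (last cs) D" "distinct cs" "D \<notin> set cs"
    unfolding rSSYT_def using ssyt_snoc by auto
  then show "cs \<in> rSSYT n \<and> D \<in> cols n \<and> (cs \<noteq> [] \<longrightarrow> colle (last cs) D \<and> last cs \<noteq> D)"
    unfolding rSSYT_def by auto
next
  assume a: "cs \<in> rSSYT n \<and> D \<in> cols n \<and> (cs \<noteq> [] \<longrightarrow> colle (last cs) D \<and> last cs \<noteq> D)"
  have "D \<notin> set cs"
  proof
    assume D: "D \<in> set cs"
    then have ne: "cs \<noteq> []" by auto
    have "colle D (last cs)" using chain_last D a unfolding rSSYT_def by auto
    moreover have "D \<in> cols n" "last cs \<in> cols n" using a ne unfolding rSSYT_def ssyt_iff by auto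
    then have "finite D" "finite (last cs)" using cols_fin by auto
    ultimately have "D = last cs" using a ne colle_antisym by blast
    then show False using a ne by simp
  qed
  then show "cs @ [D] \<in> rSSYT n" using a ssyt_snoc unfolding rSSYT_def by auto
qed

lemma finite_rSSYT: "finite (rSSYT n)"
proof (rule finite_subset)
  show "rSSYT n \<subseteq> {xs. set xs \<subseteq> Pow {1..n} \<and> length xs \<le> card (Pow {1..n})}"
  proof
    fix cs assume "cs \<in> rSSYT n"
    then have "set cs \<subseteq> Pow {1..n}" "distinct cs" unfolding rSSYT_def ssyt_iff cols_def by auto
    moreover then have "length cs \<le> card (Pow {1..n})"
      by (metis card_mono distinct_card finite_Pow_iff finite_atLeastAtMost)
    ultimately show "cs \<in> {xs. set xs \<subseteq> Pow {1..n} \<and> length xs \<le> card (Pow {1..n})}" by simp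
  qed
qed (rule finite_lists_length_le, simp)

lemma Phi_formula:
  assumes ss: "is_ssyt n cs"
  shows "Phi cs Y = (\<Prod>j<length cs - 1. Mw Y (cs!j) (cs!Suc j))"
proof -
  define L where "L = length cs"
  define idx where "idx = (\<lambda>j. {i. i < card (cs!Suc j) \<and> entry (cs!Suc j) i \<notin> cs!j})"
  have fin: "\<And>j. j < L - 1 \<Longrightarrow> finite (cs ! j)"
    using ss unfolding ssyt_iff L_def by (auto intro: cols_fin)
  have cl: "\<And>j. j < L - 1 \<Longrightarrow> colle (cs!j) (cs!Suc j)"
    using ss unfolding ssyt_iff L_def by auto
  have lp: "leg_plus cs i j = cs!j \<inter> {entry (cs!j) i..entry (cs!Suc j) i}"
    if j: "j < L - 1" "i \<in> idx j" for i j :: nat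
  proof -
    have i: "i < card (cs!Suc j)" "entry (cs!Suc j) i \<notin> cs!j" using j(2) unfolding idx_def by auto
    have "i < card (cs!j)" using cl[OF j(1)] i unfolding colle_def by simp
    then have "(i, j) \<in> leg_cells cs" unfolding leg_cells_def L_def using j i L_def by auto
    then show ?thesis unfolding leg_plus_def using i by simp
  qed
  have Peq: "{(i, j). (i, j) \<in> leg_cells cs \<and> leg_plus cs i j \<noteq> {}} = (\<lambda>(j, i). (i, j)) ` (SIGMA j:{..<L - 1}. idx j)"
  proof (rule set_eqI)
    fix p :: "nat \<times> nat"
    obtain i j where p: "p = (i, j)" by fastforce
    have "(i, j) \<in> leg_cells cs \<and> leg_plus cs i j \<noteq> {} \<longleftrightarrow> j < L - 1 \<and> i \<in> idx j"
    proof
      assume h: "(i, j) \<in> leg_cells cs \<and> leg_plus cs i j \<noteq> {}"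
      then have "j < L - 1" "i < card (cs!Suc j)" unfolding leg_cells_def L_def by auto
      moreover have "entry (cs!Suc j) i \<notin> cs!j" using h unfolding leg_plus_def by (auto split: if_splits)
      ultimately show "j < L - 1 \<and> i \<in> idx j" unfolding idx_def by auto
    next
      assume h: "j < L - 1 \<and> i \<in> idx j"
      then have i: "i < card (cs!Suc j)" "entry (cs!Suc j) i \<notin> cs!j" unfolding idx_def by auto
      have c: "colle (cs!j) (cs!Suc j)" using cl h by auto
      then have i2: "i < card (cs!j)" using i unfolding colle_def by simp
      have lc: "(i, j) \<in> leg_cells cs" unfolding leg_cells_def using h i i2 L_def by auto
      have "entry (cs!j) i \<in> cs!j" using entry_in fin h i2 by auto
      moreover have "entry (cs!j) i \<le> entry (cs!Suc j) i" using c i unfolding colle_def by auto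
      ultimately have "entry (cs!j) i \<in> leg_plus cs i j" using lp h by auto
      then show "(i, j) \<in> leg_cells cs \<and> leg_plus cs i j \<noteq> {}" using lc by auto
    qed
    then show "p \<in> {(i, j). (i, j) \<in> leg_cells cs \<and> leg_plus cs i j \<noteq> {}} \<longleftrightarrow>
               p \<in> (\<lambda>(j, i). (i, j)) ` (SIGMA j:{..<L - 1}. idx j)" using p by force
  qed
  have inj: "inj_on (\<lambda>(j, i). (i, j)) (SIGMA j:{..<L - 1}. idx j)"
    by (rule inj_onI) auto
  have fidx: "\<And>j. finite (idx j)" unfolding idx_def by auto
  have "Phi cs Y = (\<Prod>(j, i)\<in>(SIGMA j:{..<L - 1}. idx j). 1 - Y ^ card (leg_plus cs i j))"
    unfolding Phi_def Peq by (subst prod.reindex[OF inj]) (simp add: case_prod_beta comp_def)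
  also have "\<dots> = (\<Prod>j<L - 1. \<Prod>i\<in>idx j. 1 - Y ^ card (leg_plus cs i j))"
    by (subst prod.Sigma[symmetric]) (auto simp: fidx)
  also have "\<dots> = (\<Prod>j<L - 1. Mw Y (cs!j) (cs!Suc j))"
  proof (rule prod.cong[OF refl])
    fix j assume j: "j \<in> {..<L - 1}"
    have ie: "{i. i < card (cs!Suc j) \<and> entry (cs!Suc j) i \<notin> cs!j} = idx j" by (simp add: idx_def)
    show "(\<Prod>i\<in>idx j. 1 - Y ^ card (leg_plus cs i j)) = Mw Y (cs!j) (cs!Suc j)"
      unfolding Mw_def ie using lp j by (intro prod.cong) auto
  qed
  finally show ?thesis unfolding L_def .
qed

lemma Phi_snoc:
  assumes "is_ssyt n (cs @ [D])" "cs \<noteq> []"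
  shows "Phi (cs @ [D]) Y = Phi cs Y * Mw Y (last cs) D"
proof -
  have s: "is_ssyt n cs" using assms ssyt_snoc by blast
  obtain L where L: "length cs = Suc L" using assms(2) by (cases cs) auto
  have "Phi (cs @ [D]) Y = (\<Prod>j<Suc L. Mw Y ((cs @ [D])!j) ((cs @ [D])!Suc j))"
    using Phi_formula[OF assms(1), of Y] L by simp
  also have "\<dots> = (\<Prod>j<L. Mw Y (cs!j) (cs!Suc j)) * Mw Y (last cs) D"
    using L assms(2) by (simp add: nth_append last_conv_nth)
  also have "(\<Prod>j<L. Mw Y (cs!j) (cs!Suc j)) = Phi cs Y"
    using Phi_formula[OF s, of Y] L by simp
  finally show ?thesis .
qed

lemma Phi_single: "D \<in> cols n \<Longrightarrow> Phi [D] Y = 1"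
  using Phi_formula[of n "[D]" Y] unfolding ssyt_iff by simp

lemma Phi_nil: "Phi [] Y = 1"
  unfolding Phi_def leg_cells_def by simp



definition mu :: "nat \<Rightarrow> nat set \<Rightarrow> nat" where
  "mu n D = (n - card D) * Suc (n * n) + \<Sum>D"

lemma sum_le_nn: "D \<subseteq> {1..n} \<Longrightarrow> \<Sum>D \<le> n * (n::nat)"
proof -
  assume a: "D \<subseteq> {1..n}"
  have "\<And>i. i \<in> D \<Longrightarrow> i \<le> n" using a by auto
  then have "\<Sum>D \<le> card D * n" using sum_bounded_above[of D "\<lambda>x. x" n] by simp
  also have "\<dots> \<le> n * n" using card_le_m[OF a] by simp
  finally show ?thesis .
qed

lemma sum_entries: "finite C \<Longrightarrow> \<Sum>C = (\<Sum>i<card C. entry C i)"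
proof -
  assume f: "finite C"
  have "\<Sum>C = sum_list (sorted_list_of_set C)"
    using sum_list_distinct_conv_sum_set[of "sorted_list_of_set C" "\<lambda>x. x"] f by simp
  also have "\<dots> = (\<Sum>i<card C. entry C i)" unfolding entry_def
    by (simp add: sum_list_sum_nth atLeast0LessThan)
  finally show ?thesis .
qed

lemma mu_lt:
  assumes C: "C \<in> cols n" and D: "D \<in> cols n" and cl: "colle C D" and ne: "C \<noteq> D"
  shows "mu n C < mu n D"
proof -
  have Cs: "C \<subseteq> {1..n}" and Ds: "D \<subseteq> {1..n}" using C D unfolding cols_def by auto
  have fC: "finite C" "finite D" using C D cols_fin by auto
  have cle: "card D \<le> card C" using cl unfolding colle_def by simp
  have cn: "card C \<le> n" using card_le_m[OF Cs] .
  show ?thesis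
  proof (cases "card D < card C")
    case True
    define a where "a = n - card C"
    define b where "b = n - card D"
    have ab: "Suc a \<le> b" unfolding a_def b_def using True cn by simp
    have "mu n C = a * Suc (n * n) + \<Sum>C" unfolding mu_def a_def ..
    also have "\<dots> < a * Suc (n * n) + Suc (n * n)" using sum_le_nn[OF Cs] by simp
    also have "\<dots> = Suc a * Suc (n * n)" by simp
    also have "\<dots> \<le> b * Suc (n * n)" using ab by (rule mult_le_mono1)
    also have "\<dots> \<le> mu n D" unfolding mu_def b_def by simp
    finally show ?thesis .
  next
    case False
    then have eq: "card C = card D" using cle by simp
    have le: "\<forall>i<card D. entry C i \<le> entry D i" using cl unfolding colle_def by simp
    have "\<exists>i<card D. entry C i < entry D i"
    proof (rule ccontr)
      assume "\<not> (\<exists>i<card D. entry C i < entry D i)"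
      then have "\<forall>i<card D. entry D i \<le> entry C i" by auto
      then have "colle D C" unfolding colle_def using eq by simp
      then show False using colle_antisym[OF fC cl] ne by simp
    qed
    then obtain i0 where i0: "i0 < card D" "entry C i0 < entry D i0" by blast
    have "\<Sum>C < \<Sum>D"
      unfolding sum_entries[OF fC(1)] sum_entries[OF fC(2)] eq
      by (rule sum_strict_mono_ex1) (use le i0 in auto)
    then show ?thesis unfolding mu_def using eq by simp
  qed
qed

lemma Mw_self: "finite D \<Longrightarrow> Mw Y D D = 1"
proof -
  assume f: "finite D"
  have "{i. i < card D \<and> entry D i \<notin> D} = {}" using entry_in[OF f] by auto
  then show ?thesis unfolding Mw_def by (simp only: prod.empty)
qed

lemma Mw_empty: "Mw Y C {} = 1"
  unfolding Mw_def by simp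

context
  fixes n :: nat and Y :: "'a::field" and Z :: "nat \<Rightarrow> 'a"
  assumes hY: "\<forall>i\<in>{1..n}. Y ^ i \<noteq> 1" and hZ: "\<forall>i\<in>{1..n}. Z i \<noteq> 1"
    and hX: "\<forall>C. C \<subseteq> {1..n} \<and> C \<noteq> {} \<longrightarrow> Y ^ schubert_dim n ({1..n} - C) * Z (card C) \<noteq> 1"
begin

definition xx :: "nat set \<Rightarrow> 'a" where "xx C = Y ^ sig C * Z (card C)"
definition gg :: "nat set \<Rightarrow> 'a" where "gg C = xx C / (1 - xx C)"
definition hh :: "nat set list \<Rightarrow> 'a" where "hh cs = Phi cs Y * (\<Prod>C\<in>set cs. gg C)"
definition BB :: "nat set \<Rightarrow> nat set list set" where "BB D = {cs \<in> rSSYT n. cs \<noteq> [] \<and> last cs = D}"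
definition vv :: "nat set \<Rightarrow> 'a" where "vv D = sum hh (BB D)"
definition QQ :: "nat \<Rightarrow> 'a" where "QQ k = Z k / (1 - Z k) * igusa (n - k) Y (\<lambda>i. Z (i + k))"

lemma xx_ne: "C \<in> cols n \<Longrightarrow> xx C \<noteq> 1"
proof -
  assume "C \<in> cols n"
  then have C: "C \<subseteq> {1..n}" "C \<noteq> {}" unfolding cols_def by auto
  then have "Y ^ schubert_dim n ({1..n} - C) * Z (card C) \<noteq> 1" using hX by blast
  then show ?thesis unfolding xx_def using sig_schubert[OF C(1)] by simp
qed

lemma v_rec:
  assumes D: "D \<in> cols n"
  shows "vv D = gg D * (1 + (\<Sum>C\<in>{C \<in> cols n. colle C D \<and> C \<noteq> D}. Mw Y C D * vv C))"
proof -
  define E where "E = {cs \<in> rSSYT n. cs \<noteq> [] \<and> colle (last cs) D \<and> last cs \<noteq> D}"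
  define T where "T = {C \<in> cols n. colle C D \<and> C \<noteq> D}"
  have finE: "finite E" unfolding E_def using finite_rSSYT by auto
  have Beq: "BB D = insert [D] ((\<lambda>cs. cs @ [D]) ` E)"
  proof
    show "BB D \<subseteq> insert [D] ((\<lambda>cs. cs @ [D]) ` E)"
    proof
      fix cs assume "cs \<in> BB D"
      then have cs: "cs \<in> rSSYT n" "cs \<noteq> []" "last cs = D" unfolding BB_def by auto
      then have e: "cs = butlast cs @ [D]" by (metis append_butlast_last_id)
      show "cs \<in> insert [D] ((\<lambda>cs. cs @ [D]) ` E)"
      proof (cases "butlast cs = []")
        case True then show ?thesis using e by simp
      next
        case False
        then have "butlast cs \<in> E" using rssyt_snoc[of "butlast cs" D n] cs e unfolding E_def by auto
        then show ?thesis using e by blast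
      qed
    qed
  next
    show "insert [D] ((\<lambda>cs. cs @ [D]) ` E) \<subseteq> BB D"
    proof
      fix cs assume "cs \<in> insert [D] ((\<lambda>cs. cs @ [D]) ` E)"
      then consider "cs = [D]" | cs' where "cs' \<in> E" "cs = cs' @ [D]" by blast
      then show "cs \<in> BB D"
      proof cases
        case 1
        then show ?thesis using rssyt_snoc[of "[]" D n] D unfolding BB_def rSSYT_def ssyt_iff by auto
      next
        case 2
        then show ?thesis using rssyt_snoc[of cs' D n] D unfolding BB_def E_def by auto
      qed
    qed
  qed
  have notin: "[D] \<notin> (\<lambda>cs. cs @ [D]) ` E" unfolding E_def by auto
  have inj: "inj_on (\<lambda>cs. cs @ [D]) E" by (rule inj_onI) simp
  have hD: "hh [D] = gg D" unfolding hh_def using Phi_single[OF D, of Y] by simp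
  have hsnoc: "hh (cs @ [D]) = gg D * (Mw Y (last cs) D * hh cs)" if cs: "cs \<in> E" for cs
  proof -
    have r: "cs @ [D] \<in> rSSYT n" "cs \<noteq> []" using cs rssyt_snoc[of cs D n] D unfolding E_def by auto
    then have ss: "is_ssyt n (cs @ [D])" "D \<notin> set cs" unfolding rSSYT_def by auto
    have "Phi (cs @ [D]) Y = Phi cs Y * Mw Y (last cs) D" using Phi_snoc[OF ss(1) r(2)] .
    moreover have "(\<Prod>C\<in>set (cs @ [D]). gg C) = gg D * (\<Prod>C\<in>set cs. gg C)" using ss(2) by simp
    ultimately show ?thesis unfolding hh_def by (simp add: algebra_simps)
  qed
  have "vv D = hh [D] + (\<Sum>cs\<in>E. hh (cs @ [D]))"
    unfolding vv_def Beq using finE notin by (simp add: sum.reindex[OF inj])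
  also have "(\<Sum>cs\<in>E. hh (cs @ [D])) = gg D * (\<Sum>cs\<in>E. Mw Y (last cs) D * hh cs)"
    using hsnoc by (simp add: sum_distrib_left)
  also have "(\<Sum>cs\<in>E. Mw Y (last cs) D * hh cs) = (\<Sum>C\<in>T. \<Sum>cs\<in>{cs \<in> E. last cs = C}. Mw Y (last cs) D * hh cs)"
  proof (rule sum.group[symmetric])
    show "finite T" unfolding T_def using finite_cols by auto
    show "last ` E \<subseteq> T"
    proof
      fix C assume "C \<in> last ` E"
      then obtain cs where cs: "cs \<in> E" "C = last cs" by auto
      then have "C \<in> set cs" "cs \<in> rSSYT n" unfolding E_def by auto
      then have "C \<in> cols n" unfolding rSSYT_def ssyt_iff by auto
      then show "C \<in> T" using cs unfolding T_def E_def by auto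
    qed
  qed (rule finE)
  also have "\<dots> = (\<Sum>C\<in>T. Mw Y C D * vv C)"
  proof (rule sum.cong[OF refl])
    fix C assume C: "C \<in> T"
    have "{cs \<in> E. last cs = C} = BB C" using C unfolding E_def BB_def T_def by auto
    then show "(\<Sum>cs\<in>{cs \<in> E. last cs = C}. Mw Y (last cs) D * hh cs) = Mw Y C D * vv C"
      unfolding vv_def by (auto simp: sum_distrib_left BB_def intro!: sum.cong)
  qed
  finally show ?thesis using hD unfolding T_def by (simp add: algebra_simps)
qed


lemma cols_card: "D \<in> cols n \<Longrightarrow> 1 \<le> card D \<and> card D \<le> n"
  unfolding cols_def using card_le_m cols_fin
  by (metis (mono_tags, lifting) One_nat_def Suc_leI card_gt_0_iff finite_subset finite_atLeastAtMost mem_Collect_eq)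

lemma sum_Q_shift:
  assumes k: "k \<le> n"
  shows "(\<Sum>j=k..n. QQ j * qbin Y (n - k) (j - k)) = QQ k + (igusa (n - k) Y (\<lambda>i. Z (i + k)) - 1)"
proof -
  have "(\<Sum>j=k..n. QQ j * qbin Y (n - k) (j - k)) = QQ k * qbin Y (n - k) 0 + (\<Sum>j=Suc k..n. QQ j * qbin Y (n - k) (j - k))"
    using k by (simp add: sum.atLeast_Suc_atMost)
  also have "(\<Sum>j=Suc k..n. QQ j * qbin Y (n - k) (j - k)) = (\<Sum>j=1..n-k. QQ (j + k) * qbin Y (n - k) j)"
  proof -
    have "{Suc k..n} = {1 + k..(n - k) + k}" using k by simp
    then have "(\<Sum>j=Suc k..n. QQ j * qbin Y (n - k) (j - k)) = (\<Sum>j=1..n-k. QQ (j + k) * qbin Y (n - k) (j + k - k))"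
      by (simp only: sum.shift_bounds_cl_nat_ivl)
    then show ?thesis by simp
  qed
  also have "\<dots> = (\<Sum>j=1..n-k. qbin Y (n - k) j * ((\<lambda>i. Z (i + k)) j / (1 - (\<lambda>i. Z (i + k)) j)) *
                 igusa (n - k - j) Y (\<lambda>i. (\<lambda>i. Z (i + k)) (i + j)))"
  proof (rule sum.cong[OF refl])
    fix j assume j: "j \<in> {1..n - k}"
    have e1: "(\<lambda>i. Z (i + j + k)) = (\<lambda>i. Z (i + (j + k)))" by (simp add: add.assoc)
    have e2: "n - k - j = n - (j + k)" by simp
    show "QQ (j + k) * qbin Y (n - k) j = qbin Y (n - k) j * ((\<lambda>i. Z (i + k)) j / (1 - (\<lambda>i. Z (i + k)) j)) *
                 igusa (n - k - j) Y (\<lambda>i. (\<lambda>i. Z (i + k)) (i + j))"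
      unfolding QQ_def e2 using e1 by (simp add: algebra_simps)
  qed
  also have "\<dots> = igusa (n - k) Y (\<lambda>i. Z (i + k)) - 1"
    using igusa_rec[OF hY, of "n - k" "\<lambda>i. Z (i + k)"] by simp
  finally show ?thesis by simp
qed

lemma v_formula: "D \<in> cols n \<Longrightarrow> vv D = Y ^ sig D * QQ (card D)"
proof (induction "mu n D" arbitrary: D rule: less_induct)
  case less
  note D = less.prems
  define k where "k = card D"
  have k: "1 \<le> k" "k \<le> n" using cols_card[OF D] unfolding k_def by auto
  have Ds: "D \<subseteq> {1..n}" "finite D" using D cols_fin unfolding cols_def by auto
  define T where "T = {C \<in> cols n. colle C D \<and> C \<noteq> D}"
  have finT: "finite T" unfolding T_def using finite_cols by auto
  have IH: "\<And>C. C \<in> T \<Longrightarrow> vv C = Y ^ sig C * QQ (card C)"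
    using less.hyps mu_lt D unfolding T_def by blast
  have "(\<Sum>C\<in>T. Mw Y C D * vv C) = (\<Sum>C\<in>T. QQ (card C) * (Y ^ sig C * Mw Y C D))"
    using IH by (intro sum.cong) (auto simp: algebra_simps)
  also have "\<dots> = (\<Sum>j\<in>{k..n}. \<Sum>C\<in>{C \<in> T. card C = j}. QQ (card C) * (Y ^ sig C * Mw Y C D))"
  proof (rule sum.group[symmetric, OF finT])
    show "card ` T \<subseteq> {k..n}"
    proof
      fix j assume "j \<in> card ` T"
      then obtain C where C: "C \<in> T" "j = card C" by auto
      then have "card D \<le> card C" "C \<subseteq> {1..n}" unfolding T_def colle_def cols_def by auto
      then show "j \<in> {k..n}" using C card_le_m unfolding k_def by auto
    qed
  qed simp
  also have "\<dots> = (\<Sum>j\<in>{k..n}. QQ j * qbin Y (n - k) (j - k) - (if j = k then QQ j * Y ^ sig D else 0))"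
  proof (rule sum.cong[OF refl])
    fix j assume j: "j \<in> {k..n}"
    have seq: "{C \<in> T. card C = j} = Aset n D j - {D}"
    proof (rule set_eqI)
      fix C
      show "C \<in> {C \<in> T. card C = j} \<longleftrightarrow> C \<in> Aset n D j - {D}"
      proof
        assume "C \<in> {C \<in> T. card C = j}" then show "C \<in> Aset n D j - {D}"
          unfolding T_def Aset_def cols_def by auto
      next
        assume a: "C \<in> Aset n D j - {D}"
        then have "C \<subseteq> {1..n}" "card C = j" "colle C D" "C \<noteq> D" unfolding Aset_def by auto
        moreover have "C \<noteq> {}" using calculation j k by auto
        ultimately show "C \<in> {C \<in> T. card C = j}" unfolding T_def cols_def by auto
      qed
    qed
    have DA: "D \<in> Aset n D j \<longleftrightarrow> j = k" using Ds colle_refl unfolding Aset_def k_def by auto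
    have "(\<Sum>C\<in>{C \<in> T. card C = j}. QQ (card C) * (Y ^ sig C * Mw Y C D))
        = QQ j * (\<Sum>C\<in>Aset n D j - {D}. Y ^ sig C * Mw Y C D)"
      unfolding seq sum_distrib_left by (rule sum.cong) (auto simp: Aset_def)
    also have "(\<Sum>C\<in>Aset n D j - {D}. Y ^ sig C * Mw Y C D)
        = (\<Sum>C\<in>Aset n D j. Y ^ sig C * Mw Y C D) - (if j = k then Y ^ sig D else 0)"
      using DA Mw_self[OF Ds(2), of Y] by (simp add: sum_diff1 Aset_fin)
    also have "(\<Sum>C\<in>Aset n D j. Y ^ sig C * Mw Y C D) = qbin Y (n - k) (j - k)"
      using L_lemma[OF Ds(1), of j Y] j unfolding k_def by simp
    finally show "(\<Sum>C\<in>{C \<in> T. card C = j}. QQ (card C) * (Y ^ sig C * Mw Y C D))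
        = QQ j * qbin Y (n - k) (j - k) - (if j = k then QQ j * Y ^ sig D else 0)"
      by (cases "j = k") (simp_all add: right_diff_distrib)
  qed
  also have "\<dots> = (\<Sum>j=k..n. QQ j * qbin Y (n - k) (j - k)) - QQ k * Y ^ sig D"
    using k by (simp add: sum_subtractf)
  also have "\<dots> = QQ k + (igusa (n - k) Y (\<lambda>i. Z (i + k)) - 1) - QQ k * Y ^ sig D"
    using sum_Q_shift[OF k(2)] by simp
  finally have S: "(\<Sum>C\<in>T. Mw Y C D * vv C) = QQ k + (igusa (n - k) Y (\<lambda>i. Z (i + k)) - 1) - QQ k * Y ^ sig D" .
  define I where "I = igusa (n - k) Y (\<lambda>i. Z (i + k))"
  define y where "y = Y ^ sig D"
  define z where "z = Z k"
  have xD: "xx D = y * z" unfolding xx_def y_def z_def k_def ..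
  have n1: "1 - y * z \<noteq> 0" using xx_ne[OF D] xD by simp
  have n2: "1 - z \<noteq> 0" using hZ k unfolding z_def by auto
  have Q: "QQ k = z / (1 - z) * I" unfolding QQ_def z_def I_def ..
  have "vv D = gg D * (1 + (\<Sum>C\<in>T. Mw Y C D * vv C))" using v_rec[OF D] unfolding T_def .
  also have "1 + (\<Sum>C\<in>T. Mw Y C D * vv C) = I + QQ k * (1 - y)"
    unfolding S I_def[symmetric] y_def[symmetric] by (simp add: algebra_simps)
  also have "gg D * (I + QQ k * (1 - y)) = (y * z) / (1 - y * z) * (I + z / (1 - z) * I * (1 - y))"
    unfolding gg_def xD Q by simp
  also have "\<dots> = y * (z / (1 - z) * I)"
  proof -
    have "(y * z) / (1 - y * z) * (I + z / (1 - z) * I * (1 - y)) = (y * z) / (1 - y * z) * (I * (1 - y * z) / (1 - z))"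
      using n2 by (simp add: field_simps)
    also have "\<dots> = (y * (z / (1 - z) * I)) * ((1 - y * z) / (1 - y * z))"
      by (simp only: divide_inverse mult_ac)
    also have "\<dots> = y * (z / (1 - z) * I)" using n1 by simp
    finally show ?thesis .
  qed
  finally show ?case unfolding Q[symmetric] y_def k_def .
qed

lemma HLS_eq: "HLS n Y (\<lambda>C. Y ^ schubert_dim n ({1..n} - C) * Z (card C)) = igusa n Y Z"
proof -
  have "HLS n Y (\<lambda>C. Y ^ schubert_dim n ({1..n} - C) * Z (card C)) = sum hh (rSSYT n)"
    unfolding HLS_def hh_def
  proof (rule sum.cong[OF refl])
    fix cs assume cs: "cs \<in> rSSYT n"
    have "\<And>C. C \<in> set cs \<Longrightarrow> Y ^ schubert_dim n ({1..n} - C) * Z (card C) = xx C"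
      using cs sig_schubert unfolding rSSYT_def ssyt_iff cols_def xx_def by auto
    then show "Phi cs Y * (\<Prod>C\<in>set cs. Y ^ schubert_dim n ({1..n} - C) * Z (card C) / (1 - Y ^ schubert_dim n ({1..n} - C) * Z (card C)))
      = Phi cs Y * prod gg (set cs)" unfolding gg_def by (simp cong: prod.cong)
  qed
  also have "\<dots> = hh [] + sum hh (rSSYT n - {[]})"
  proof -
    have "[] \<in> rSSYT n" unfolding rSSYT_def ssyt_iff by simp
    then show ?thesis using finite_rSSYT by (simp add: sum.remove)
  qed
  also have "hh [] = 1" unfolding hh_def using Phi_nil by simp
  also have "sum hh (rSSYT n - {[]}) = (\<Sum>D\<in>cols n. \<Sum>cs\<in>{cs \<in> rSSYT n - {[]}. last cs = D}. hh cs)"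
  proof (rule sum.group[symmetric])
    show "last ` (rSSYT n - {[]}) \<subseteq> cols n"
    proof
      fix D assume "D \<in> last ` (rSSYT n - {[]})"
      then obtain cs where "cs \<in> rSSYT n" "cs \<noteq> []" "D = last cs" by auto
      then show "D \<in> cols n" unfolding rSSYT_def ssyt_iff by auto
    qed
  qed (use finite_rSSYT finite_cols in auto)
  also have "\<dots> = (\<Sum>D\<in>cols n. vv D)"
    unfolding vv_def BB_def by (rule sum.cong[OF refl]) (rule sum.cong, auto)
  also have "\<dots> = (\<Sum>D\<in>cols n. QQ (card D) * Y ^ sig D)"
    using v_formula by (intro sum.cong) (auto simp: algebra_simps)
  also have "\<dots> = (\<Sum>k\<in>{1..n}. \<Sum>D\<in>{D \<in> cols n. card D = k}. QQ (card D) * Y ^ sig D)"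
  proof (rule sum.group[symmetric])
    show "card ` cols n \<subseteq> {1..n}" using cols_card by auto
  qed (use finite_cols in auto)
  also have "\<dots> = (\<Sum>k=1..n. qbin Y n k * (Z k / (1 - Z k)) * igusa (n - k) Y (\<lambda>i. Z (i + k)))"
  proof (rule sum.cong[OF refl])
    fix k assume k: "k \<in> {1..n}"
    have seq: "{D \<in> cols n. card D = k} = Aset n {} k"
      unfolding Aset_def cols_def colle_def using k by auto
    have "(\<Sum>D\<in>{D \<in> cols n. card D = k}. QQ (card D) * Y ^ sig D) = QQ k * (\<Sum>C\<in>Aset n {} k. Y ^ sig C * Mw Y C {})"
      unfolding seq sum_distrib_left by (rule sum.cong) (auto simp: Aset_def Mw_empty)
    also have "(\<Sum>C\<in>Aset n {} k. Y ^ sig C * Mw Y C {}) = qbin Y n k"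
      using L_lemma[of "{}" n k Y] by simp
    finally show "(\<Sum>D\<in>{D \<in> cols n. card D = k}. QQ (card D) * Y ^ sig D) =
        qbin Y n k * (Z k / (1 - Z k)) * igusa (n - k) Y (\<lambda>i. Z (i + k))"
      unfolding QQ_def by (simp add: algebra_simps)
  qed
  finally show ?thesis using igusa_rec[OF hY, of n Z] by simp
qed

end


theorem mainTheorem5:
  fixes n :: nat and Y :: "'a::field" and Z :: "nat \<Rightarrow> 'a"
  assumes "\<forall>i\<in>{1..n}. Y ^ i \<noteq> 1"
    and "\<forall>i\<in>{1..n}. Z i \<noteq> 1"
    and "\<forall>C. C \<subseteq> {1..n} \<and> C \<noteq> {} \<longrightarrow>
           Y ^ schubert_dim n ({1..n} - C) * Z (card C) \<noteq> 1"
  shows "igusa n Y Z = HLS n Y (\<lambda>C. Y ^ schubert_dim n ({1..n} - C) * Z (card C))"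
  using HLS_eq[OF assms] by simp

end
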